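(* Let $N\ge1$ and $K(x,y)=2\sum_{j=0}^{N-1}\sin\left(\frac{2j+1}{2}x\right)\sin\left(\frac{2j+1}{2}y\right)$. For $a,b,c,d\in\mathbb{Z}$ define $\Pi(a)=\frac1\pi\int_0^\pi K(x,x)\cos(ax)\,\mathrm{d}x$, $\Pi(a,b)=\frac1{\pi^2}\int_0^\pi\int_0^\pi K(x,y)^2\cos(ax)\cos(by)\,\mathrm{d}x\,\mathrm{d}y$, $\Pi(a,b,c)=\frac1{\pi^3}\int_{[0,\pi]^3}K(x,y)K(y,z)K(z,x)\cos(ax)\cos(by)\cos(cz)\,\mathrm{d}x\,\mathrm{d}y\,\mathrm{d}z$, $\Pi(a,b,c,d)=\frac1{\pi^4}\int_{[0,\pi]^4}K(x,y)K(y,z)K(z,w)K(w,x)\cos(ax)\cos(by)\cos(cz)\cos(dw)\,\mathrm{d}x\,\mathrm{d}y\,\mathrm{d}z\,\mathrm{d}w$, and let $\varepsilon(a)=\mathbb{1}_{\{1\le a\le 2N-1,\ a\text{ odd}\}}$, $\alpha(a,b,c)=(\min\{a,N\}+\min\{b,N\}-c)^+$ where $x^+=\max\{x,0\}$. Then $\Pi(0)=\Pi(0,0)=N$, and for all integers $k,\ell\ge1$: $\Pi(k)=-\frac{\varepsilon(k)}2$; $\Pi(k,\ell)=\frac{(2N-k)^+}{4}$ if $k=\ell$ and $\Pi(k,\ell)=-\frac{\varepsilon(k+\ell)}{2}$ if $k\ne\ell$; $\Pi(0,k)=-\frac{\varepsilon(k)}{2}$; $\Pi(k,\ell,\ell)=\frac{(2N-k)^+}{8}$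 if $k=2\ell$ and $\Pi(k,\ell,\ell)=-\frac{3\varepsilon(k+2\ell)+\varepsilon(k)\varepsilon(|2\ell-k|)}{8}$ if $k\ne 2\ell$; $\Pi(k,\ell,k+\ell)=\frac{(N-k-\ell)^+}{4}+\frac{\alpha(k+\ell,\ell,k+\ell)+\alpha(k+\ell,k,k+\ell)}{8}$; $\Pi(0,k,k)=\frac{(2N-k)^+}{4}$ and $\Pi(k,k,k,k)=\frac{(N-k)^+}{4}+\frac{(2N-k)^+}{16}$; and if $k\ne\ell$, $\Pi(k,k,\ell,\ell)=\frac{(N-\max\{k,\ell\})^++(N-k-\ell)^+}{8}+\frac{\alpha(\min\{k,\ell\},\max\{k,\ell\},\max\{k,\ell\})}{16}+\frac{\alpha(k+\ell,\ell,k+\ell)+\alpha(k+\ell,k,k+\ell)+\alpha(\ell,\ell-k,\ell)+\alpha(k,k-\ell,k)}{16}$, $\Pi(k,\ell,k,\ell)=\frac{(N-k-\ell)^+}{4}+\frac{\alpha(k+\ell,\min\{k,\ell\},k+\ell)}{4}+\frac{\alpha(k,k,k+\ell)+\alpha(\ell,\ell,k+\ell)}{8}$.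
   Context: $\mathbb{1}_{\{\cdot\}}$ denotes the indicator function. *)

theory Defs
  imports "HOL-Analysis.Analysis"
begin

definition K :: "nat \<Rightarrow> real \<Rightarrow> real \<Rightarrow> real" where
  "K N x y = 2 * (\<Sum>j<N. sin ((2 * real j + 1) / 2 * x) * sin ((2 * real j + 1) / 2 * y))"

text \<open>Multiple integrals over [0,pi]^n, written as iterated integrals
  (integrands are continuous, so this agrees with the integral over the cube).\<close>
definition Pi1 :: "nat \<Rightarrow> int \<Rightarrow> real" where
  "Pi1 N a = (1 / pi) * integral {0..pi} (\<lambda>x. K N x x * cos (of_int a * x))"

definition Pi2 :: "nat \<Rightarrow> int \<Rightarrow> int \<Rightarrow> real" where
  "Pi2 N a b = (1 / pi ^ 2) * integral {0..pi} (\<lambda>x. integral {0..pi} (\<lambda>y.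
      (K N x y)\<^sup>2 * cos (of_int a * x) * cos (of_int b * y)))"

definition Pi3 :: "nat \<Rightarrow> int \<Rightarrow> int \<Rightarrow> int \<Rightarrow> real" where
  "Pi3 N a b c = (1 / pi ^ 3) * integral {0..pi} (\<lambda>x. integral {0..pi} (\<lambda>y. integral {0..pi} (\<lambda>z.
      K N x y * K N y z * K N z x * cos (of_int a * x) * cos (of_int b * y) * cos (of_int c * z))))"

definition Pi4 :: "nat \<Rightarrow> int \<Rightarrow> int \<Rightarrow> int \<Rightarrow> int \<Rightarrow> real" where
  "Pi4 N a b c d = (1 / pi ^ 4) * integral {0..pi} (\<lambda>x. integral {0..pi} (\<lambda>y. integral {0..pi} (\<lambda>z.
      integral {0..pi} (\<lambda>w.
      K N x y * K N y z * K N z w * K N w x *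
      cos (of_int a * x) * cos (of_int b * y) * cos (of_int c * z) * cos (of_int d * w)))))"

definition pp :: "int \<Rightarrow> int" where
  "pp x = max x 0"

definition eps :: "nat \<Rightarrow> int \<Rightarrow> real" where
  "eps N a = (if 1 \<le> a \<and> a \<le> 2 * int N - 1 \<and> odd a then 1 else 0)"

definition alpha :: "nat \<Rightarrow> int \<Rightarrow> int \<Rightarrow> int \<Rightarrow> int" where
  "alpha N a b c = pp (min a (int N) + min b (int N) - c)"

end

theory Submission
  imports Defs
begin


definition D :: "int \<Rightarrow> int \<Rightarrow> int \<Rightarrow> real" where
  "D a u v = (if v = u + a then 1 else 0) + (if v = u - a then 1 else 0)"

definition T :: "int \<Rightarrow> int \<Rightarrow> int \<Rightarrow> real" where
  "T a u v = (D a u v - D a u (-1-v)) / 4"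

lemma T_odd2: "T a u (-1-v) = - T a u v"
  unfolding T_def D_def by auto

lemma T_odd1: "T a (-1-u) v = - T a u v"
  unfolding T_def D_def by auto

lemma T_sym: "T a u v = T a v u"
  unfolding T_def D_def by auto

lemma sum_reflect:
  fixes n :: int
  shows "(\<Sum>v\<in>{-n..<n}. F v) = (\<Sum>v\<in>{-n..<n}. F (-1-v))"
proof -
  have "bij_betw (\<lambda>v. -1-v) {-n..<n} {-n..<n}"
    by (rule bij_betwI[where g="\<lambda>v. -1-v"]) auto
  then show ?thesis by (rule sum.reindex_bij_betw[symmetric])
qed

lemma T_sum_odd:
  fixes n :: int
  assumes "\<And>v. v \<in> {-n..<n} \<Longrightarrow> F (-1-v) = - F v"
  shows "(\<Sum>v\<in>{-n..<n}. T a u v * F v) = (1/2) * (\<Sum>v\<in>{-n..<n}. D a u v * F v)"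
proof -
  have "(\<Sum>v\<in>{-n..<n}. D a u (-1-v) * F v) = (\<Sum>v\<in>{-n..<n}. D a u (-1-(-1-v)) * F (-1-v))"
    by (rule sum_reflect)
  also have "\<dots> = - (\<Sum>v\<in>{-n..<n}. D a u v * F v)"
    by (simp add: assms sum_negf[symmetric])
  finally have *: "(\<Sum>v\<in>{-n..<n}. D a u (-1-v) * F v) = - (\<Sum>v\<in>{-n..<n}. D a u v * F v)" .
  have "(\<Sum>v\<in>{-n..<n}. T a u v * F v) = ((\<Sum>v\<in>{-n..<n}. D a u v * F v) - (\<Sum>v\<in>{-n..<n}. D a u (-1-v) * F v)) / 4"
    unfolding T_def by (simp add: sum_subtractf[symmetric] sum_divide_distrib left_diff_distrib)
  then show ?thesis using * by simp
qed

lemma D_sum: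
  fixes n :: int
  shows "(\<Sum>v\<in>{-n..<n}. D a u v * F v) =
    (if u + a \<in> {-n..<n} then F (u + a) else 0) + (if u - a \<in> {-n..<n} then F (u - a) else 0)"
  unfolding D_def by (simp add: distrib_right sum.distrib if_distrib[of "\<lambda>x. x * _"] sum.delta' cong: if_cong)


lemma cnt:
  fixes a b lo hi c :: int
  shows "(\<Sum>v\<in>{a..<b}. (if v + c \<in> {lo..<hi} then F v else 0)) = (\<Sum>v\<in>{max a (lo-c)..<min b (hi-c)}. F v)"
proof -
  have "(\<Sum>v\<in>{a..<b}. (if v + c \<in> {lo..<hi} then F v else 0)) = (\<Sum>v\<in>{a..<b} \<inter> {v. v + c \<in> {lo..<hi}}. F v)"
    by (simp add: sum.inter_restrict)
  also have "{a..<b} \<inter> {v. v + c \<in> {lo..<hi}} = {max a (lo-c)..<min b (hi-c)}" by auto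
  finally show ?thesis .
qed

lemma cnt0:
  fixes a b lo hi :: int
  shows "(\<Sum>v\<in>{a..<b}. (if v \<in> {lo..<hi} then F v else 0)) = (\<Sum>v\<in>{max a lo..<min b hi}. F v)"
  using cnt[where c=0 and a=a and b=b and lo=lo and hi=hi and F=F] by simp

lemma D_close: "D d (v + c) v = of_bool (c + d = 0) + of_bool (c - d = 0)"
  unfolding D_def by auto

lemma D_closeR: "D d (v + c) (-1 - v) = of_bool (2 * v = -1 - c - d) + of_bool (2 * v = -1 - c + d)"
  unfolding D_def by auto

lemma D_sum':
  fixes n :: int
  shows "(\<Sum>v\<in>{-n..<n}. D a u v * F v) =
    of_bool (u + a \<in> {-n..<n}) * F (u + a) + of_bool (u - a \<in> {-n..<n}) * F (u - a)"
  unfolding D_sum by simp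

lemma cnt':
  fixes a b lo hi c :: int and F :: "int \<Rightarrow> real"
  shows "(\<Sum>v\<in>{a..<b}. of_bool (v + c \<in> {lo..<hi}) * F v) = (\<Sum>v\<in>{max a (lo-c)..<min b (hi-c)}. F v)"
proof -
  have "(\<lambda>v. of_bool (v + c \<in> {lo..<hi}) * F v) = (\<lambda>v. if v + c \<in> {lo..<hi} then F v else 0)"
    by (rule ext) simp
  then show ?thesis by (simp only: cnt)
qed

lemma sum_const_int: "(\<Sum>v\<in>{a..<b::int}. (c::real)) = real (nat (b - a)) * c"
  by simp

abbreviation U :: "int \<Rightarrow> int set" where "U n \<equiv> {-n..<n}"

lemma sum_odd_neg:
  fixes F :: "int \<Rightarrow> real"
  shows "(\<Sum>q\<in>U n. T b (-1-u) q * F q) = - (\<Sum>q\<in>U n. T b u q * F q)"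
  by (simp add: T_odd1 sum_negf[symmetric])

lemma red1: "(\<Sum>u\<in>U n. T a u u) = ((\<Sum>v\<in>U n. D a v v) - (\<Sum>v\<in>U n. D a v (-1-v))) / 4"
  unfolding T_def by (simp only: sum_subtractf[symmetric] sum_divide_distrib)

lemma red2: "(\<Sum>u\<in>U n. \<Sum>v\<in>U n. T b u v * T a u v) =
   ((\<Sum>v\<in>U n. \<Sum>u\<in>U n. D a v u * D b u v) - (\<Sum>v\<in>U n. \<Sum>u\<in>U n. D a v u * D b u (-1-v))) / 8"
proof -
  have "(\<Sum>u\<in>U n. \<Sum>v\<in>U n. T b u v * T a u v) = (\<Sum>v\<in>U n. \<Sum>u\<in>U n. T a v u * T b u v)"
    by (subst sum.swap) (simp add: T_sym mult.commute)
  also have "\<dots> = (\<Sum>v\<in>U n. (1/2) * (\<Sum>u\<in>U n. D a v u * T b u v))"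
    by (rule sum.cong[OF refl], rule T_sum_odd) (simp add: T_odd1)
  also have "\<dots> = (\<Sum>v\<in>U n. (1/2) * (\<Sum>u\<in>U n. (D a v u * D b u v - D a v u * D b u (-1-v)) / 4))"
    unfolding T_def by (simp add: right_diff_distrib)
  also have "\<dots> = ((\<Sum>v\<in>U n. \<Sum>u\<in>U n. D a v u * D b u v) - (\<Sum>v\<in>U n. \<Sum>u\<in>U n. D a v u * D b u (-1-v))) / 8"
    by (simp only: sum_subtractf[symmetric] sum_divide_distrib sum_distrib_left) (simp add: field_simps)
  finally show ?thesis .
qed

lemma red3: "(\<Sum>u\<in>U n. \<Sum>v\<in>U n. (\<Sum>q\<in>U n. T b u q * T c q v) * T a u v) =
   ((\<Sum>v\<in>U n. \<Sum>u\<in>U n. D a v u * (\<Sum>q\<in>U n. D b u q * D c q v))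
    - (\<Sum>v\<in>U n. \<Sum>u\<in>U n. D a v u * (\<Sum>q\<in>U n. D b u q * D c q (-1-v)))) / 16"
proof -
  have "(\<Sum>u\<in>U n. \<Sum>v\<in>U n. (\<Sum>q\<in>U n. T b u q * T c q v) * T a u v) =
     (\<Sum>v\<in>U n. \<Sum>u\<in>U n. T a v u * (\<Sum>q\<in>U n. T b u q * T c q v))"
    by (subst sum.swap) (simp add: T_sym mult.commute)
  also have "\<dots> = (\<Sum>v\<in>U n. (1/2) * (\<Sum>u\<in>U n. D a v u * (\<Sum>q\<in>U n. T b u q * T c q v)))"
    by (rule sum.cong[OF refl], rule T_sum_odd) (simp add: sum_odd_neg)
  also have "\<dots> = (\<Sum>v\<in>U n. (1/2) * (\<Sum>u\<in>U n. D a v u * ((1/2) * (\<Sum>q\<in>U n. D b u q * T c q v))))"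
    by (intro sum.cong refl arg_cong2[where f="(*)"] T_sum_odd) (simp add: T_odd1)
  also have "\<dots> = (\<Sum>v\<in>U n. (1/2) * (\<Sum>u\<in>U n. D a v u * ((1/2) * (\<Sum>q\<in>U n. (D b u q * D c q v - D b u q * D c q (-1-v)) / 4))))"
    unfolding T_def by (simp add: right_diff_distrib)
  also have "\<dots> = ((\<Sum>v\<in>U n. \<Sum>u\<in>U n. D a v u * (\<Sum>q\<in>U n. D b u q * D c q v))
    - (\<Sum>v\<in>U n. \<Sum>u\<in>U n. D a v u * (\<Sum>q\<in>U n. D b u q * D c q (-1-v)))) / 16"
    by (simp only: sum_subtractf[symmetric] sum_divide_distrib sum_distrib_left) (simp add: field_simps)
  finally show ?thesis .
qed

lemma red4: "(\<Sum>u\<in>U n. \<Sum>v\<in>U n. (\<Sum>q\<in>U n. T b u q * (\<Sum>r\<in>U n. T c q r * T d r v)) * T a u v) =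
   ((\<Sum>v\<in>U n. \<Sum>u\<in>U n. D a v u * (\<Sum>q\<in>U n. D b u q * (\<Sum>r\<in>U n. D c q r * D d r v)))
    - (\<Sum>v\<in>U n. \<Sum>u\<in>U n. D a v u * (\<Sum>q\<in>U n. D b u q * (\<Sum>r\<in>U n. D c q r * D d r (-1-v))))) / 32"
proof -
  have "(\<Sum>u\<in>U n. \<Sum>v\<in>U n. (\<Sum>q\<in>U n. T b u q * (\<Sum>r\<in>U n. T c q r * T d r v)) * T a u v) =
     (\<Sum>v\<in>U n. \<Sum>u\<in>U n. T a v u * (\<Sum>q\<in>U n. T b u q * (\<Sum>r\<in>U n. T c q r * T d r v)))"
    by (subst sum.swap) (simp add: T_sym mult.commute)
  also have "\<dots> = (\<Sum>v\<in>U n. (1/2) * (\<Sum>u\<in>U n. D a v u * (\<Sum>q\<in>U n. T b u q * (\<Sum>r\<in>U n. T c q r * T d r v))))"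
    by (rule sum.cong[OF refl], rule T_sum_odd) (simp add: sum_odd_neg)
  also have "\<dots> = (\<Sum>v\<in>U n. (1/2) * (\<Sum>u\<in>U n. D a v u * ((1/2) * (\<Sum>q\<in>U n. D b u q * (\<Sum>r\<in>U n. T c q r * T d r v)))))"
    by (intro sum.cong refl arg_cong2[where f="(*)"] T_sum_odd) (simp add: sum_odd_neg)
  also have "\<dots> = (\<Sum>v\<in>U n. (1/2) * (\<Sum>u\<in>U n. D a v u * ((1/2) * (\<Sum>q\<in>U n. D b u q * ((1/2) * (\<Sum>r\<in>U n. D c q r * T d r v))))))"
    by (intro sum.cong refl arg_cong2[where f="(*)"] T_sum_odd) (simp add: T_odd1)
  also have "\<dots> = (\<Sum>v\<in>U n. (1/2) * (\<Sum>u\<in>U n. D a v u * ((1/2) * (\<Sum>q\<in>U n. D b u q * ((1/2) * (\<Sum>r\<in>U n. (D c q r * D d r v - D c q r * D d r (-1-v)) / 4))))))"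
    unfolding T_def by (simp add: right_diff_distrib)
  also have "\<dots> = ((\<Sum>v\<in>U n. \<Sum>u\<in>U n. D a v u * (\<Sum>q\<in>U n. D b u q * (\<Sum>r\<in>U n. D c q r * D d r v)))
    - (\<Sum>v\<in>U n. \<Sum>u\<in>U n. D a v u * (\<Sum>q\<in>U n. D b u q * (\<Sum>r\<in>U n. D c q r * D d r (-1-v))))) / 32"
    by (simp only: sum_subtractf[symmetric] sum_divide_distrib sum_distrib_left) (simp add: field_simps)
  finally show ?thesis .
qed

lemma D_par: "D a u v \<noteq> 0 \<Longrightarrow> even (v - u + a)"
  unfolding D_def by (auto split: if_splits)

lemma par4:
  assumes "even (a + b + c + d)"
  shows "(\<Sum>v\<in>U n. \<Sum>u\<in>U n. D a v u * (\<Sum>q\<in>U n. D b u q * (\<Sum>r\<in>U n. D c q r * D d r (-1-v)))) = 0"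
proof -
  have "D a v u * (D b u q * (D c q r * D d r (-1-v))) = 0" for v u q r
  proof (rule ccontr)
    assume "D a v u * (D b u q * (D c q r * D d r (-1-v))) \<noteq> 0"
    then have "even (u - v + a)" "even (q - u + b)" "even (r - q + c)" "even (-1-v - r + d)"
      by (auto dest!: D_par)
    then have "even ((u - v + a) + (q - u + b) + (r - q + c) + (-1-v - r + d))" by auto
    moreover have "(u - v + a) + (q - u + b) + (r - q + c) + (-1-v - r + d) = (a+b+c+d) - 1 - 2 * v" by simp
    ultimately have "even ((a+b+c+d) - 1 - 2 * v)" by metis
    then show False using assms by presburger
  qed
  then show ?thesis by (simp only: sum_distrib_left sum.neutral_const)
qed

lemma par3:
  assumes "even (a + b + c)"
  shows "(\<Sum>v\<in>U n. \<Sum>u\<in>U n. D a v u * (\<Sum>q\<in>U n. D b u q * D c q (-1-v))) = 0"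
proof -
  have "D a v u * (D b u q * D c q (-1-v)) = 0" for v u q
  proof (rule ccontr)
    assume "D a v u * (D b u q * D c q (-1-v)) \<noteq> 0"
    then have "even (u - v + a)" "even (q - u + b)" "even (-1-v - q + c)"
      by (auto dest!: D_par)
    then have "even ((u - v + a) + (q - u + b) + (-1-v - q + c))" by auto
    moreover have "(u - v + a) + (q - u + b) + (-1-v - q + c) = (a+b+c) - 1 - 2 * v" by simp
    ultimately have "even ((a+b+c) - 1 - 2 * v)" by metis
    then show False using assms by presburger
  qed
  then show ?thesis by (simp only: sum_distrib_left sum.neutral_const)
qed

lemma par2:
  assumes "even (a + b)"
  shows "(\<Sum>v\<in>U n. \<Sum>u\<in>U n. D a v u * D b u (-1-v)) = 0"
proof -
  have "D a v u * D b u (-1-v) = 0" for v u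
  proof (rule ccontr)
    assume "D a v u * D b u (-1-v) \<noteq> 0"
    then have "even (u - v + a)" "even (-1-v - u + b)"
      by (auto dest!: D_par)
    then have "even ((u - v + a) + (-1-v - u + b))" by auto
    moreover have "(u - v + a) + (-1-v - u + b) = (a+b) - 1 - 2 * v" by simp
    ultimately have "even ((a+b) - 1 - 2 * v)" by metis
    then show False using assms by presburger
  qed
  then show ?thesis by (intro sum.neutral ballI) blast
qed



lemma cnt2:
  fixes lo hi e :: int
  shows "(\<Sum>v\<in>{lo..<hi}. (of_bool (2 * v = e) :: real)) = of_bool (even e \<and> 2 * lo \<le> e \<and> e < 2 * hi)"
proof -
  have "(\<Sum>v\<in>{lo..<hi}. (of_bool (2 * v = e) :: real)) = (\<Sum>v\<in>{lo..<hi}. if 2 * v = e then 1 else 0)"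
    by (simp add: of_bool_def)
  also have "\<dots> = (\<Sum>v\<in>{v\<in>{lo..<hi}. 2 * v = e}. 1)"
    by (subst sum.inter_filter) auto
  also have "{v\<in>{lo..<hi}. 2 * v = e} = (if even e \<and> lo \<le> e div 2 \<and> e div 2 < hi then {e div 2} else {})"
    by auto
  finally have "(\<Sum>v\<in>{lo..<hi}. (of_bool (2 * v = e) :: real)) = of_bool (even e \<and> lo \<le> e div 2 \<and> e div 2 < hi)" by simp
  also have "(even e \<and> lo \<le> e div 2 \<and> e div 2 < hi) = (even e \<and> 2 * lo \<le> e \<and> e < 2 * hi)"
    by auto
  finally show ?thesis .
qed

lemma D_close0: "D d v v = of_bool (d = 0) + of_bool (- d = 0)"
  unfolding D_def by auto

lemma D_closeR': "D d (v + c) (- 1 + - v) = of_bool (2 * v = -1 - c - d) + of_bool (2 * v = -1 - c + d)"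
  unfolding D_def by auto

lemma D_closeR0': "D d v (- 1 + - v) = of_bool (2 * v = -1 - d) + of_bool (2 * v = -1 + d)"
  unfolding D_def by auto

lemma real_nat_max: "real (nat x) = max (real_of_int x) 0"
  by simp

lemmas pipe1 = D_sum'
lemmas pipe2 = diff_conv_add_uminus add.assoc
lemmas pipe3 = D_close D_close0 D_closeR' D_closeR0' distrib_left distrib_right sum.distrib mult.assoc cnt' sum_const_int cnt2

lemma P4kkkk:
  fixes k n :: int
  assumes "k \<ge> 1" "n \<ge> 1"
  shows "(\<Sum>u\<in>U n. \<Sum>v\<in>U n. (\<Sum>q\<in>U n. T k u q * (\<Sum>r\<in>U n. T k q r * T k r v)) * T k u v)
    = of_int (pp (n - k)) / 4 + of_int (pp (2 * n - k)) / 16"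
  apply (subst red4)
  apply (subst par4, simp)
  apply (simp only: pipe1)
  apply (simp only: pipe2)
  apply (simp only: pipe3)
  using assms apply (simp add: pp_def real_nat_max of_int_max of_int_min)
  using assms by (auto simp: max_def min_def)

lemma C_P1_0:
  fixes k l n :: int
  assumes "n \<ge> 1"
  shows "(\<Sum>u\<in>U n. T 0 u u) = of_int n"
  apply (subst red1)
  apply ((simp only: pipe1)?)
  apply ((simp only: pipe2)?)
  apply ((simp only: pipe3)?)
  using assms by (simp add: pp_def real_nat_max of_int_max of_int_min; (auto simp: max_def min_def; presburger)?)

lemma C_P2_00:
  fixes k l n :: int
  assumes "n \<ge> 1"
  shows "(\<Sum>u\<in>U n. \<Sum>v\<in>U n. T 0 u v * T 0 u v) = of_int n"
  apply (subst red2)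
  apply (subst par2, simp)
  apply ((simp only: pipe1)?)
  apply ((simp only: pipe2)?)
  apply ((simp only: pipe3)?)
  using assms by (simp add: pp_def real_nat_max of_int_max of_int_min; (auto simp: max_def min_def; presburger)?)

lemma C_P1_k:
  fixes k l n :: int
  assumes "k \<ge> 1" "n \<ge> 1"
  shows "(\<Sum>u\<in>U n. T k u u) = - (if 1 \<le> k \<and> k \<le> 2 * n - 1 \<and> odd (k) then 1 else 0) / 2"
  apply (subst red1)
  apply ((simp only: pipe1)?)
  apply ((simp only: pipe2)?)
  apply ((simp only: pipe3)?)
  using assms by (simp add: pp_def real_nat_max of_int_max of_int_min; (auto simp: max_def min_def; presburger)?)

lemma C_P2_kk:
  fixes k l n :: int
  assumes "k \<ge> 1" "n \<ge> 1"
  shows "(\<Sum>u\<in>U n. \<Sum>v\<in>U n. T k u v * T k u v) = of_int (pp (2 * n - k)) / 4"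
  apply (subst red2)
  apply (subst par2, simp)
  apply ((simp only: pipe1)?)
  apply ((simp only: pipe2)?)
  apply ((simp only: pipe3)?)
  using assms by (simp add: pp_def real_nat_max of_int_max of_int_min; (auto simp: max_def min_def; presburger)?)

lemma C_P2_kl:
  fixes k l n :: int
  assumes "k \<ge> 1" "l \<ge> 1" "k \<noteq> l" "n \<ge> 1"
  shows "(\<Sum>u\<in>U n. \<Sum>v\<in>U n. T l u v * T k u v) = - (if 1 \<le> k + l \<and> k + l \<le> 2 * n - 1 \<and> odd (k + l) then 1 else 0) / 2"
  apply (subst red2)
  apply ((simp only: pipe1)?)
  apply ((simp only: pipe2)?)
  apply ((simp only: pipe3)?)
  using assms by (simp add: pp_def real_nat_max of_int_max of_int_min; (auto simp: max_def min_def; presburger)?)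

lemma C_P2_0k:
  fixes k l n :: int
  assumes "k \<ge> 1" "n \<ge> 1"
  shows "(\<Sum>u\<in>U n. \<Sum>v\<in>U n. T k u v * T 0 u v) = - (if 1 \<le> k \<and> k \<le> 2 * n - 1 \<and> odd (k) then 1 else 0) / 2"
  apply (subst red2)
  apply ((simp only: pipe1)?)
  apply ((simp only: pipe2)?)
  apply ((simp only: pipe3)?)
  using assms by (simp add: pp_def real_nat_max of_int_max of_int_min; (auto simp: max_def min_def; presburger)?)

lemma C_P3_a:
  fixes k l n :: int
  assumes "l \<ge> 1" "n \<ge> 1"
  shows "(\<Sum>u\<in>U n. \<Sum>v\<in>U n. (\<Sum>q\<in>U n. T l u q * T l q v) * T (2 * l) u v) = of_int (pp (2 * n - 2 * l)) / 8"
  apply (subst red3)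
  apply (subst par3, simp)
  apply ((simp only: pipe1)?)
  apply ((simp only: pipe2)?)
  apply ((simp only: pipe3)?)
  using assms by (simp add: pp_def real_nat_max of_int_max of_int_min; (auto simp: max_def min_def; presburger)?)

lemma div16_8: "(x::real) / 16 = y / 8 \<longleftrightarrow> x = 2 * y" by auto

lemma C_P3_b:
  fixes k l n :: int
  assumes "k \<ge> 1" "l \<ge> 1" "k \<noteq> 2 * l" "n \<ge> 1"
  shows "(\<Sum>u\<in>U n. \<Sum>v\<in>U n. (\<Sum>q\<in>U n. T l u q * T l q v) * T k u v) = - (3 * (if 1 \<le> k + 2 * l \<and> k + 2 * l \<le> 2 * n - 1 \<and> odd (k + 2 * l) then 1 else 0) + (if 1 \<le> k \<and> k \<le> 2 * n - 1 \<and> odd (k) then 1 else 0) * (if 1 \<le> \<bar>2 * l - k\<bar> \<and> \<bar>2 * l - k\<bar> \<le> 2 * n - 1 \<and> odd (\<bar>2 * l - k\<bar>) then 1 else 0)) / 8"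
  apply (subst red3)
  apply ((simp only: pipe1)?)
  apply ((simp only: pipe2)?)
  apply ((simp only: pipe3)?)
  apply (cases "even k")
   subgoal using assms by simp
  apply (subgoal_tac "k + l + l \<noteq> 0 \<and> k + l - l \<noteq> 0 \<and> k + - l + l \<noteq> 0 \<and> k + - l - l \<noteq> 0 \<and> - k + l + l \<noteq> 0 \<and> - k + l - l \<noteq> 0 \<and> - k + - l + l \<noteq> 0 \<and> - k + - l - l \<noteq> 0")
   prefer 2 using assms apply linarith
  apply (simp only: of_bool_eq_0_iff[THEN iffD2] of_bool_eq(1) mult_zero_right add_0_left add_0_right not_not)
  apply (simp only: even_diff even_add even_minus odd_one simp_thms)
  apply (subgoal_tac "odd (k + 2 * l) \<and> odd \<bar>2 * l + - k\<bar> \<and> even (2 * l)")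
   prefer 2 apply simp
  apply (simp only: div16_8)
  apply (subgoal_tac "\<exists>j. k = 2 * j + 1")
   prefer 2 apply (metis oddE)
  apply (elim exE)
  apply hypsubst
  using assms by (auto simp: of_bool_def max_def min_def abs_if; presburger)

lemma C_P3_c:
  fixes k l n :: int
  assumes "k \<ge> 1" "l \<ge> 1" "n \<ge> 1"
  shows "(\<Sum>u\<in>U n. \<Sum>v\<in>U n. (\<Sum>q\<in>U n. T l u q * T (k + l) q v) * T k u v) = of_int (pp (n - k - l)) / 4 + of_int (pp (min (k + l) n + min (l) n - (k + l)) + pp (min (k + l) n + min (k) n - (k + l))) / 8"
  apply (subst red3)
  apply (subst par3, simp)
  apply ((simp only: pipe1)?)
  apply ((simp only: pipe2)?)
  apply ((simp only: pipe3)?)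
  using assms by (simp add: pp_def real_nat_max of_int_max of_int_min; (auto simp: max_def min_def; presburger)?)

lemma C_P3_0:
  fixes k l n :: int
  assumes "k \<ge> 1" "n \<ge> 1"
  shows "(\<Sum>u\<in>U n. \<Sum>v\<in>U n. (\<Sum>q\<in>U n. T k u q * T k q v) * T 0 u v) = of_int (pp (2 * n - k)) / 4"
  apply (subst red3)
  apply (subst par3, simp)
  apply ((simp only: pipe1)?)
  apply ((simp only: pipe2)?)
  apply ((simp only: pipe3)?)
  using assms by (simp add: pp_def real_nat_max of_int_max of_int_min; (auto simp: max_def min_def; presburger)?)

lemma C_P4_b:
  fixes k l n :: int
  assumes "k \<ge> 1" "l \<ge> 1" "k \<noteq> l" "n \<ge> 1"
  shows "(\<Sum>u\<in>U n. \<Sum>v\<in>U n. (\<Sum>q\<in>U n. T k u q * (\<Sum>r\<in>U n. T l q r * T l r v)) * T k u v) = of_int (pp (n - max k l) + pp (n - k - l)) / 8 + of_int (pp (min (min k l) n + min (max k l) n - (max k l))) / 16 + of_int (pp (min (k + l) n + min (l) n - (k + l)) + pp (min (k + l) n + min (k) n - (k + l)) + pp (min (l) n + min (l - k) n - (l)) + pp (min (k) n + min (k - l) n - (k))) / 16"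
  apply (subst red4)
  apply (subst par4, simp)
  apply ((simp only: pipe1)?)
  apply ((simp only: pipe2)?)
  apply ((simp only: pipe3)?)
  using assms apply (simp add: pp_def real_nat_max of_int_max of_int_min)
  apply (simp add: field_simps)
  apply (subgoal_tac "(1::real) \<le> of_int k \<and> (1::real) \<le> of_int l \<and> (1::real) \<le> of_int n \<and> real_of_int k \<noteq> of_int l")
   subgoal by (simp add: max_def min_def split: if_splits; linarith?)
  using assms by simp

lemma C_P4_c:
  fixes k l n :: int
  assumes "k \<ge> 1" "l \<ge> 1" "k \<noteq> l" "n \<ge> 1"
  shows "(\<Sum>u\<in>U n. \<Sum>v\<in>U n. (\<Sum>q\<in>U n. T l u q * (\<Sum>r\<in>U n. T k q r * T l r v)) * T k u v) = of_int (pp (n - k - l)) / 4 + of_int (pp (min (k + l) n + min (min k l) n - (k + l))) / 4 + of_int (pp (min (k) n + min (k) n - (k + l)) + pp (min (l) n + min (l) n - (k + l))) / 8"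
  apply (subst red4)
  apply (subst par4, simp)
  apply ((simp only: pipe1)?)
  apply ((simp only: pipe2)?)
  apply ((simp only: pipe3)?)
  using assms apply (simp add: pp_def real_nat_max of_int_max of_int_min)
  apply (simp add: field_simps)
  apply (subgoal_tac "(1::real) \<le> of_int k \<and> (1::real) \<le> of_int l \<and> (1::real) \<le> of_int n \<and> real_of_int k \<noteq> of_int l")
   subgoal by (simp add: max_def min_def split: if_splits; linarith?)
  using assms by simp



definition s :: "int \<Rightarrow> real \<Rightarrow> real" where
  "s u t = sin ((of_int u + 1/2) * t)"

lemma s_refl: "s (-1-u) t = - s u t"
proof -
  have "(of_int (-1-u) + 1/2) * t = - ((of_int u + 1/2) * t)" by (simp add: algebra_simps)
  then show ?thesis unfolding s_def by simp
qed

lemma K_eq: "K N x y = (\<Sum>u\<in>{-int N..<int N}. s u x * s u y)"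
proof -
  let ?n = "int N"
  have split: "{-?n..<?n} = {-?n..<0} \<union> {0..<?n}" by auto
  have "(\<Sum>u\<in>{-?n..<?n}. s u x * s u y) = (\<Sum>u\<in>{-?n..<0}. s u x * s u y) + (\<Sum>u\<in>{0..<?n}. s u x * s u y)"
    by (subst split, rule sum.union_disjoint) auto
  also have "(\<Sum>u\<in>{-?n..<0}. s u x * s u y) = (\<Sum>u\<in>{0..<?n}. s u x * s u y)"
  proof -
    have bij: "bij_betw (\<lambda>u. -1-u) {0..<?n} {-?n..<0}"
      by (rule bij_betwI[where g="\<lambda>v. -1-v"]) auto
    then have "(\<Sum>u\<in>{-?n..<0}. s u x * s u y) = (\<Sum>u\<in>{0..<?n}. s (-1-u) x * s (-1-u) y)"
      using sum.reindex_bij_betw[OF bij, of "\<lambda>u. s u x * s u y"] by simp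
    then show ?thesis by (simp add: s_refl)
  qed
  also have "(\<Sum>u\<in>{0..<?n}. s u x * s u y) = (\<Sum>j<N. s (int j) x * s (int j) y)"
  proof -
    have "{0..<?n} = int ` {..<N}" by (simp add: image_int_atLeastLessThan atLeast0LessThan[symmetric])
    then show ?thesis by (simp add: sum.reindex)
  qed
  finally show ?thesis unfolding K_def s_def by (simp add: add_divide_distrib)
qed

lemma int_cos: "integral {0..pi} (\<lambda>t. cos (of_int q * t)) = (if q = 0 then pi else 0)"
proof (cases "q = 0")
  case True then show ?thesis by simp
next
  case False
  have "((\<lambda>t. cos (of_int q * t)) has_integral (sin (of_int q * pi) / of_int q - sin (of_int q * 0) / of_int q)) {0..pi}"
    apply (rule fundamental_theorem_of_calculus)
     apply simp
    using False apply (auto intro!: derivative_eq_intros simp: has_real_derivative_iff_has_vector_derivative[symmetric])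
    done
  moreover have "sin (of_int q * pi) = 0" using sin_times_pi_eq_0[of "of_int q"] by simp
  ultimately show ?thesis using False by (simp add: integral_unique)
qed

lemma cos_cont_int: "(\<lambda>t. cos (of_int q * t)) integrable_on {0..pi}"
  by (intro integrable_continuous_interval continuous_intros)

lemma g_expand:
  "cos (of_int a * t) * (s u t * s v t) =
   (cos (of_int (a - (u - v)) * t) + cos (of_int (a + (u - v)) * t)
    - cos (of_int (a - (u + v + 1)) * t) - cos (of_int (a + (u + v + 1)) * t)) / 4"
proof -
  have e1: "(of_int u + 1/2) * t - (of_int v + 1/2) * t = of_int (u - v) * t" by (simp add: algebra_simps)
  have e2: "(of_int u + 1/2) * t + (of_int v + 1/2) * t = of_int (u + v + 1) * t" by (simp add: algebra_simps)
  have ss: "s u t * s v t = (cos (of_int (u - v) * t) - cos (of_int (u + v + 1) * t)) / 2"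
    unfolding s_def sin_times_sin e1 e2 ..
  have c1: "cos (of_int a * t) * cos (of_int m * t) = (cos (of_int (a - m) * t) + cos (of_int (a + m) * t)) / 2" for m
  proof -
    have "of_int a * t - of_int m * t = of_int (a - m) * t" "of_int a * t + of_int m * t = of_int (a + m) * t"
      by (simp_all add: algebra_simps)
    then show ?thesis unfolding cos_times_cos by simp
  qed
  have alg: "X * ((Y - Z) / 2) = (P1 + P2 - P3 - P4) / 4" if "X * Y = (P1 + P2) / 2" "X * Z = (P3 + P4) / 2"
    for X Y Z P1 P2 P3 P4 :: real
  proof -
    have "X * ((Y - Z) / 2) = (X * Y - X * Z) / 2" by (simp add: algebra_simps)
    then show ?thesis using that by (simp add: field_simps)
  qed
  show ?thesis unfolding ss
    by (rule alg[OF c1[of "u - v"] c1[of "u + v + 1"]])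
qed

lemma int_g: "integral {0..pi} (\<lambda>t. cos (of_int a * t) * (s u t * s v t)) = pi * T a u v"
proof -
  have "integral {0..pi} (\<lambda>t. cos (of_int a * t) * (s u t * s v t)) =
    integral {0..pi} (\<lambda>t. (cos (of_int (a - (u - v)) * t) + cos (of_int (a + (u - v)) * t)
    - cos (of_int (a - (u + v + 1)) * t) - cos (of_int (a + (u + v + 1)) * t)) / 4)"
    by (simp only: g_expand)
  also have "\<dots> = (integral {0..pi} (\<lambda>t. cos (of_int (a - (u - v)) * t)) + integral {0..pi} (\<lambda>t. cos (of_int (a + (u - v)) * t))
    - integral {0..pi} (\<lambda>t. cos (of_int (a - (u + v + 1)) * t)) - integral {0..pi} (\<lambda>t. cos (of_int (a + (u + v + 1)) * t))) / 4"
    by (simp only: integral_divide integral_diff integral_add integrable_diff integrable_add cos_cont_int)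
  also have "\<dots> = pi * T a u v"
    unfolding int_cos T_def D_def by (auto simp: algebra_simps)
  finally show ?thesis .
qed

definition ker :: "int \<Rightarrow> (int \<Rightarrow> int \<Rightarrow> real) \<Rightarrow> real \<Rightarrow> real \<Rightarrow> real" where
  "ker n M x y = (\<Sum>u\<in>{-n..<n}. \<Sum>v\<in>{-n..<n}. M u v * (s u x * s v y))"

lemma g_integrable: "(\<lambda>t. cos (of_int a * t) * (s u t * s v t)) integrable_on {0..pi}"
  unfolding s_def by (intro integrable_continuous_interval continuous_intros)

lemma int3:
  fixes A B C :: "int set"
  assumes "finite A" "finite B" "finite C"
  shows "integral {0..pi} (\<lambda>w. \<Sum>u\<in>A. \<Sum>p\<in>B. \<Sum>v\<in>C. c u p v * (cos (of_int d * w) * (s u w * s p w))) =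
    (\<Sum>u\<in>A. \<Sum>p\<in>B. \<Sum>v\<in>C. c u p v * (pi * T d u p))"
proof -
  have i1: "(\<lambda>w. c u p v * (cos (of_int d * w) * (s u w * s p w))) integrable_on {0..pi}" for u p v
    unfolding s_def by (intro integrable_continuous_interval continuous_intros)
  have i2: "(\<lambda>w. \<Sum>v\<in>C. c u p v * (cos (of_int d * w) * (s u w * s p w))) integrable_on {0..pi}" for u p
    by (rule integrable_sum) (use assms i1 in auto)
  have i3: "(\<lambda>w. \<Sum>p\<in>B. \<Sum>v\<in>C. c u p v * (cos (of_int d * w) * (s u w * s p w))) integrable_on {0..pi}" for u
    by (rule integrable_sum) (use assms i2 in auto)
  show ?thesis
    using assms i1 i2 i3
    by (simp add: Henstock_Kurzweil_Integration.integral_sum int_g)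
qed

lemma int1:
  fixes A :: "int set"
  assumes "finite A"
  shows "integral {0..pi} (\<lambda>w. \<Sum>u\<in>A. cos (of_int d * w) * (s u w * s u w)) = (\<Sum>u\<in>A. pi * T d u u)"
  using assms g_integrable by (simp add: Henstock_Kurzweil_Integration.integral_sum int_g)

lemma int2:
  fixes A B :: "int set"
  assumes "finite A" "finite B"
  shows "integral {0..pi} (\<lambda>w. \<Sum>u\<in>A. \<Sum>v\<in>B. c u v * (cos (of_int d * w) * (s u w * s v w))) =
    (\<Sum>u\<in>A. \<Sum>v\<in>B. c u v * (pi * T d u v))"
proof -
  have i1: "(\<lambda>w. c u v * (cos (of_int d * w) * (s u w * s v w))) integrable_on {0..pi}" for u v
    unfolding s_def by (intro integrable_continuous_interval continuous_intros)
  have i2: "(\<lambda>w. \<Sum>v\<in>B. c u v * (cos (of_int d * w) * (s u w * s v w))) integrable_on {0..pi}" for u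
    by (rule integrable_sum) (use assms i1 in auto)
  show ?thesis
    using assms i1 i2
    by (simp add: Henstock_Kurzweil_Integration.integral_sum int_g)
qed

lemma of_bool_sum1: "finite A \<Longrightarrow> u \<in> A \<Longrightarrow> (\<Sum>v\<in>A. of_bool (u = v) * (f v :: real)) = f u"
proof -
  assume a: "finite A" "u \<in> A"
  have "(\<Sum>v\<in>A. of_bool (u = v) * f v) = (\<Sum>v\<in>A. if u = v then f v else 0)" by (rule sum.cong) auto
  then show ?thesis using a by simp
qed

lemma of_bool_sum2: "finite A \<Longrightarrow> v \<in> A \<Longrightarrow> (\<Sum>q\<in>A. (f q :: real) * of_bool (q = v)) = f v"
proof -
  assume a: "finite A" "v \<in> A"
  have "(\<Sum>q\<in>A. f q * of_bool (q = v)) = (\<Sum>q\<in>A. if v = q then f q else 0)" by (rule sum.cong) auto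
  then show ?thesis using a by simp
qed

lemma KM:
  "integral {0..pi} (\<lambda>w. K N z w * cos (of_int d * w) * ker (int N) M w x) =
   pi * ker (int N) (\<lambda>u v. \<Sum>q\<in>{-int N..<int N}. T d u q * M q v) z x"
proof -
  let ?U = "{-int N..<int N}"
  have eq: "K N z w * cos (of_int d * w) * ker (int N) M w x =
    (\<Sum>p\<in>?U. \<Sum>u\<in>?U. \<Sum>v\<in>?U. (s u z * M p v * s v x) * (cos (of_int d * w) * (s p w * s u w)))" for w
    unfolding K_eq ker_def by (simp add: sum_distrib_left sum_distrib_right mult_ac)
  have "integral {0..pi} (\<lambda>w. K N z w * cos (of_int d * w) * ker (int N) M w x) =
     (\<Sum>p\<in>?U. \<Sum>u\<in>?U. \<Sum>v\<in>?U. (s u z * M p v * s v x) * (pi * T d p u))"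
    by (simp only: eq int3 finite_atLeastLessThan_int)
  also have "\<dots> = (\<Sum>u\<in>?U. \<Sum>p\<in>?U. \<Sum>v\<in>?U. (s u z * M p v * s v x) * (pi * T d p u))"
    by (rule sum.swap)
  also have "\<dots> = (\<Sum>u\<in>?U. \<Sum>v\<in>?U. \<Sum>p\<in>?U. (s u z * M p v * s v x) * (pi * T d p u))"
    by (rule sum.cong[OF refl]) (rule sum.swap)
  also have "\<dots> = pi * ker (int N) (\<lambda>u v. \<Sum>q\<in>?U. T d u q * M q v) z x"
    unfolding ker_def by (simp add: sum_distrib_left sum_distrib_right mult_ac T_sym[of d _ u for u])
  finally show ?thesis .
qed

lemma K_ker: "K N w x = ker (int N) (\<lambda>p v. of_bool (p = v)) w x"
proof -
  have "(\<Sum>v\<in>{-int N..<int N}. of_bool (u = v) * (s u w * s v x)) = s u w * s u x" if "u \<in> {-int N..<int N}" for u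
    using of_bool_sum1[of "{-int N..<int N}" u "\<lambda>v. s u w * s v x"] that by simp
  then show ?thesis unfolding K_eq ker_def by (intro sum.cong refl) auto
qed

lemma KK:
  "integral {0..pi} (\<lambda>w. K N z w * cos (of_int d * w) * K N w x) = pi * ker (int N) (T d) z x"
proof -
  have "integral {0..pi} (\<lambda>w. K N z w * cos (of_int d * w) * K N w x) =
    integral {0..pi} (\<lambda>w. K N z w * cos (of_int d * w) * ker (int N) (\<lambda>p v. of_bool (p = v)) w x)"
    by (simp only: K_ker[of N _ x])
  also have "\<dots> = pi * ker (int N) (\<lambda>u v. \<Sum>q\<in>{-int N..<int N}. T d u q * of_bool (q = v)) z x"
    by (rule KM)
  also have "\<dots> = pi * ker (int N) (T d) z x"
    unfolding ker_def by (simp add: of_bool_sum2)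
  finally show ?thesis .
qed

lemma TR:
  "integral {0..pi} (\<lambda>x. ker (int N) M x x * cos (of_int a * x)) =
   pi * (\<Sum>u\<in>{-int N..<int N}. \<Sum>v\<in>{-int N..<int N}. M u v * T a u v)"
proof -
  let ?U = "{-int N..<int N}"
  have eq: "ker (int N) M x x * cos (of_int a * x) = (\<Sum>u\<in>?U. \<Sum>v\<in>?U. M u v * (cos (of_int a * x) * (s u x * s v x)))" for x
    unfolding ker_def by (simp add: sum_distrib_left sum_distrib_right mult_ac)
  show ?thesis
    by (simp only: eq int2 finite_atLeastLessThan_int) (simp add: sum_distrib_left mult_ac)
qed

lemma P1int:
  "integral {0..pi} (\<lambda>x. K N x x * cos (of_int a * x)) = pi * (\<Sum>u\<in>{-int N..<int N}. T a u u)"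
proof -
  let ?U = "{-int N..<int N}"
  have eq: "K N x x * cos (of_int a * x) = (\<Sum>u\<in>?U. cos (of_int a * x) * (s u x * s u x))" for x
    unfolding K_eq by (simp add: sum_distrib_left sum_distrib_right mult_ac)
  show ?thesis
    by (simp only: eq int1 finite_atLeastLessThan_int) (simp add: sum_distrib_left)
qed

lemma K_sym: "K N x y = K N y x"
  unfolding K_def by (simp add: mult.commute)



lemma Pi1_eq: "Pi1 N a = (\<Sum>u\<in>{-int N..<int N}. T a u u)"
  unfolding Pi1_def P1int by simp

lemma Pi2_inner:
  "integral {0..pi} (\<lambda>y. (K N x y)\<^sup>2 * cos (of_int a * x) * cos (of_int b * y)) =
   pi * (ker (int N) (T b) x x * cos (of_int a * x))"
proof -
  have "(\<lambda>y. (K N x y)\<^sup>2 * cos (of_int a * x) * cos (of_int b * y)) =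
        (\<lambda>y. cos (of_int a * x) * (K N x y * cos (of_int b * y) * K N y x))"
    by (rule ext) (simp add: power2_eq_square K_sym[of N _ x] mult_ac)
  then show ?thesis by (simp only: KK integral_mult_right) (simp add: mult_ac)
qed

lemma Pi2_eq: "Pi2 N a b = (\<Sum>u\<in>{-int N..<int N}. \<Sum>v\<in>{-int N..<int N}. T b u v * T a u v)"
  unfolding Pi2_def Pi2_inner by (simp add: TR power2_eq_square)

lemma Pi3_inner:
  "integral {0..pi} (\<lambda>z. K N x y * K N y z * K N z x * cos (of_int a * x) * cos (of_int b * y) * cos (of_int c * z)) =
   (K N x y * cos (of_int a * x) * cos (of_int b * y)) * (pi * ker (int N) (T c) y x)"
proof -
  have "(\<lambda>z. K N x y * K N y z * K N z x * cos (of_int a * x) * cos (of_int b * y) * cos (of_int c * z)) =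
        (\<lambda>z. (K N x y * cos (of_int a * x) * cos (of_int b * y)) * (K N y z * cos (of_int c * z) * K N z x))"
    by (rule ext) (simp add: mult_ac)
  then show ?thesis by (simp only: KK integral_mult_right)
qed

lemma Pi3_mid:
  "integral {0..pi} (\<lambda>y. (K N x y * cos (of_int a * x) * cos (of_int b * y)) * (pi * ker (int N) (T c) y x)) =
   (pi * cos (of_int a * x)) * (pi * ker (int N) (\<lambda>u v. \<Sum>q\<in>{-int N..<int N}. T b u q * T c q v) x x)"
proof -
  have "(\<lambda>y. (K N x y * cos (of_int a * x) * cos (of_int b * y)) * (pi * ker (int N) (T c) y x)) =
        (\<lambda>y. (pi * cos (of_int a * x)) * (K N x y * cos (of_int b * y) * ker (int N) (T c) y x))"
    by (rule ext) (simp add: mult_ac)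
  then show ?thesis by (simp only: KM integral_mult_right)
qed

lemma Pi3_eq: "Pi3 N a b c = (\<Sum>u\<in>{-int N..<int N}. \<Sum>v\<in>{-int N..<int N}.
     (\<Sum>q\<in>{-int N..<int N}. T b u q * T c q v) * T a u v)"
proof -
  have "(\<lambda>x. (pi * cos (of_int a * x)) * (pi * ker (int N) (\<lambda>u v. \<Sum>q\<in>{-int N..<int N}. T b u q * T c q v) x x))
     = (\<lambda>x. (pi * pi) * (ker (int N) (\<lambda>u v. \<Sum>q\<in>{-int N..<int N}. T b u q * T c q v) x x * cos (of_int a * x)))"
    by (rule ext) (simp add: mult_ac)
  then show ?thesis
    unfolding Pi3_def Pi3_inner Pi3_mid by (simp only: integral_mult_right TR) (simp add: power3_eq_cube)
qed

lemma Pi4_inner: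
  "integral {0..pi} (\<lambda>w. K N x y * K N y z * K N z w * K N w x *
      cos (of_int a * x) * cos (of_int b * y) * cos (of_int c * z) * cos (of_int d * w)) =
   (K N x y * K N y z * cos (of_int a * x) * cos (of_int b * y) * cos (of_int c * z)) * (pi * ker (int N) (T d) z x)"
proof -
  have "(\<lambda>w. K N x y * K N y z * K N z w * K N w x *
      cos (of_int a * x) * cos (of_int b * y) * cos (of_int c * z) * cos (of_int d * w)) =
        (\<lambda>w. (K N x y * K N y z * cos (of_int a * x) * cos (of_int b * y) * cos (of_int c * z)) * (K N z w * cos (of_int d * w) * K N w x))"
    by (rule ext) (simp add: mult_ac)
  then show ?thesis by (simp only: KK integral_mult_right)
qed

lemma Pi4_z:
  "integral {0..pi} (\<lambda>z. (K N x y * K N y z * cos (of_int a * x) * cos (of_int b * y) * cos (of_int c * z)) * (pi * ker (int N) (T d) z x)) =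
   (pi * K N x y * cos (of_int a * x) * cos (of_int b * y)) * (pi * ker (int N) (\<lambda>u v. \<Sum>r\<in>{-int N..<int N}. T c u r * T d r v) y x)"
proof -
  have "(\<lambda>z. (K N x y * K N y z * cos (of_int a * x) * cos (of_int b * y) * cos (of_int c * z)) * (pi * ker (int N) (T d) z x)) =
        (\<lambda>z. (pi * K N x y * cos (of_int a * x) * cos (of_int b * y)) * (K N y z * cos (of_int c * z) * ker (int N) (T d) z x))"
    by (rule ext) (simp add: mult_ac)
  then show ?thesis by (simp only: KM integral_mult_right)
qed

lemma Pi4_y:
  "integral {0..pi} (\<lambda>y. (pi * K N x y * cos (of_int a * x) * cos (of_int b * y)) * (pi * ker (int N) M y x)) =
   (pi * pi * cos (of_int a * x)) * (pi * ker (int N) (\<lambda>u v. \<Sum>q\<in>{-int N..<int N}. T b u q * M q v) x x)"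
proof -
  have "(\<lambda>y. (pi * K N x y * cos (of_int a * x) * cos (of_int b * y)) * (pi * ker (int N) M y x)) =
        (\<lambda>y. (pi * pi * cos (of_int a * x)) * (K N x y * cos (of_int b * y) * ker (int N) M y x))"
    by (rule ext) (simp add: mult_ac)
  then show ?thesis by (simp only: KM integral_mult_right)
qed

lemma Pi4_eq: "Pi4 N a b c d = (\<Sum>u\<in>{-int N..<int N}. \<Sum>v\<in>{-int N..<int N}.
     (\<Sum>q\<in>{-int N..<int N}. T b u q * (\<Sum>r\<in>{-int N..<int N}. T c q r * T d r v)) * T a u v)"
proof -
  let ?M = "\<lambda>u v. \<Sum>q\<in>{-int N..<int N}. T b u q * (\<Sum>r\<in>{-int N..<int N}. T c q r * T d r v)"
  have "(\<lambda>x. (pi * pi * cos (of_int a * x)) * (pi * ker (int N) ?M x x))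
     = (\<lambda>x. (pi * pi * pi) * (ker (int N) ?M x x * cos (of_int a * x)))"
    by (rule ext) (simp add: mult_ac)
  then show ?thesis
    unfolding Pi4_def Pi4_inner Pi4_z Pi4_y by (simp only: integral_mult_right TR) (simp add: power4_eq_xxxx)
qed


theorem lemma5:
  fixes N :: nat
  assumes "N \<ge> 1"
  shows "Pi1 N 0 = real N \<and> Pi2 N 0 0 = real N \<and>
    (\<forall>k l :: int. k \<ge> 1 \<longrightarrow> l \<ge> 1 \<longrightarrow>
      Pi1 N k = - eps N k / 2 \<and>
      (k = l \<longrightarrow> Pi2 N k l = of_int (pp (2 * int N - k)) / 4) \<and>
      (k \<noteq> l \<longrightarrow> Pi2 N k l = - eps N (k + l) / 2) \<and>
      Pi2 N 0 k = - eps N k / 2 \<and>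
      (k = 2 * l \<longrightarrow> Pi3 N k l l = of_int (pp (2 * int N - k)) / 8) \<and>
      (k \<noteq> 2 * l \<longrightarrow> Pi3 N k l l = - (3 * eps N (k + 2 * l) + eps N k * eps N \<bar>2 * l - k\<bar>) / 8) \<and>
      Pi3 N k l (k + l) = of_int (pp (int N - k - l)) / 4
          + of_int (alpha N (k + l) l (k + l) + alpha N (k + l) k (k + l)) / 8 \<and>
      Pi3 N 0 k k = of_int (pp (2 * int N - k)) / 4 \<and>
      Pi4 N k k k k = of_int (pp (int N - k)) / 4 + of_int (pp (2 * int N - k)) / 16 \<and>
      (k \<noteq> l \<longrightarrow>
        Pi4 N k k l l = of_int (pp (int N - max k l) + pp (int N - k - l)) / 8
          + of_int (alpha N (min k l) (max k l) (max k l)) / 16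
          + of_int (alpha N (k + l) l (k + l) + alpha N (k + l) k (k + l)
                    + alpha N l (l - k) l + alpha N k (k - l) k) / 16) \<and>
      (k \<noteq> l \<longrightarrow>
        Pi4 N k l k l = of_int (pp (int N - k - l)) / 4
          + of_int (alpha N (k + l) (min k l) (k + l)) / 4
          + of_int (alpha N k k (k + l) + alpha N l l (k + l)) / 8))"
  proof -
  have n1: "int N \<ge> 1" using assms by simp
  have A: "Pi1 N 0 = real N" unfolding Pi1_eq using C_P1_0[OF n1] by simp
  have B: "Pi2 N 0 0 = real N" unfolding Pi2_eq using C_P2_00[OF n1] by simp
  have C: "Pi1 N k = - eps N k / 2 \<and>
      (k = l \<longrightarrow> Pi2 N k l = of_int (pp (2 * int N - k)) / 4) \<and>
      (k \<noteq> l \<longrightarrow> Pi2 N k l = - eps N (k + l) / 2) \<and>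
      Pi2 N 0 k = - eps N k / 2 \<and>
      (k = 2 * l \<longrightarrow> Pi3 N k l l = of_int (pp (2 * int N - k)) / 8) \<and>
      (k \<noteq> 2 * l \<longrightarrow> Pi3 N k l l = - (3 * eps N (k + 2 * l) + eps N k * eps N \<bar>2 * l - k\<bar>) / 8) \<and>
      Pi3 N k l (k + l) = of_int (pp (int N - k - l)) / 4
          + of_int (alpha N (k + l) l (k + l) + alpha N (k + l) k (k + l)) / 8 \<and>
      Pi3 N 0 k k = of_int (pp (2 * int N - k)) / 4 \<and>
      Pi4 N k k k k = of_int (pp (int N - k)) / 4 + of_int (pp (2 * int N - k)) / 16 \<and>
      (k \<noteq> l \<longrightarrow>
        Pi4 N k k l l = of_int (pp (int N - max k l) + pp (int N - k - l)) / 8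
          + of_int (alpha N (min k l) (max k l) (max k l)) / 16
          + of_int (alpha N (k + l) l (k + l) + alpha N (k + l) k (k + l)
                    + alpha N l (l - k) l + alpha N k (k - l) k) / 16) \<and>
      (k \<noteq> l \<longrightarrow>
        Pi4 N k l k l = of_int (pp (int N - k - l)) / 4
          + of_int (alpha N (k + l) (min k l) (k + l)) / 4
          + of_int (alpha N k k (k + l) + alpha N l l (k + l)) / 8)"
    if k1: "k \<ge> 1" and l1: "l \<ge> 1" for k l :: int
  proof (intro conjI impI)
    show "Pi1 N k = - eps N k / 2"
      unfolding Pi1_eq eps_def by (rule C_P1_k[OF k1 n1])
    show "Pi2 N k l = of_int (pp (2 * int N - k)) / 4" if "k = l"
      unfolding Pi2_eq \<open>k = l\<close> by (rule C_P2_kk[OF l1 n1])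
    show "Pi2 N k l = - eps N (k + l) / 2" if "k \<noteq> l"
      unfolding Pi2_eq eps_def by (rule C_P2_kl[OF k1 l1 that n1])
    show "Pi2 N 0 k = - eps N k / 2"
      unfolding Pi2_eq eps_def by (rule C_P2_0k[OF k1 n1])
    show "Pi3 N k l l = of_int (pp (2 * int N - k)) / 8" if "k = 2 * l"
      unfolding Pi3_eq \<open>k = 2 * l\<close> by (rule C_P3_a[OF l1 n1])
    show "Pi3 N k l l = - (3 * eps N (k + 2 * l) + eps N k * eps N \<bar>2 * l - k\<bar>) / 8" if "k \<noteq> 2 * l"
      unfolding Pi3_eq eps_def by (rule C_P3_b[OF k1 l1 that n1])
    show "Pi3 N k l (k + l) = of_int (pp (int N - k - l)) / 4
          + of_int (alpha N (k + l) l (k + l) + alpha N (k + l) k (k + l)) / 8"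
      unfolding Pi3_eq alpha_def by (rule C_P3_c[OF k1 l1 n1])
    show "Pi3 N 0 k k = of_int (pp (2 * int N - k)) / 4"
      unfolding Pi3_eq by (rule C_P3_0[OF k1 n1])
    show "Pi4 N k k k k = of_int (pp (int N - k)) / 4 + of_int (pp (2 * int N - k)) / 16"
      unfolding Pi4_eq by (rule P4kkkk[OF k1 n1])
    show "Pi4 N k k l l = of_int (pp (int N - max k l) + pp (int N - k - l)) / 8
          + of_int (alpha N (min k l) (max k l) (max k l)) / 16
          + of_int (alpha N (k + l) l (k + l) + alpha N (k + l) k (k + l)
                    + alpha N l (l - k) l + alpha N k (k - l) k) / 16" if "k \<noteq> l"
      unfolding Pi4_eq alpha_def by (rule C_P4_b[OF k1 l1 that n1])
    show "Pi4 N k l k l = of_int (pp (int N - k - l)) / 4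
          + of_int (alpha N (k + l) (min k l) (k + l)) / 4
          + of_int (alpha N k k (k + l) + alpha N l l (k + l)) / 8" if "k \<noteq> l"
      unfolding Pi4_eq alpha_def by (rule C_P4_c[OF k1 l1 that n1])
  qed
  show ?thesis using A B C by blast
qed

end
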